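(* Let $V$ be a toroidal vertex algebra. For $\mathbf{m}\in\mathbb{Z}^r$ set $V_{(\mathbf{m})}=\{v_{-1,-\mathbf{m}}\mathbf{1}\mid v\in V\}$. Then $V^0=\bigoplus_{\mathbf{m}\in\mathbb{Z}^r}V_{(\mathbf{m})}$, and with this grading the vertex algebra $(V^0,Y^0,\mathbf{1})$ is a vertex $\mathbb{Z}^r$-graded algebra.
   Context: Fix a positive integer $r$. Write $\mathbf{x}=(x_1,\dots,x_r)$, $\mathbf{x}^{\mathbf{m}}=x_1^{m_1}\cdots x_r^{m_r}$ (similarly for other variables), $\mathbf{z}\mathbf{y}=(z_1y_1,\dots,z_ry_r)$. For a vector space $W$ put $\mathcal{E}(W,r)=\mathrm{Hom}(W,W[[x_1^{\pm1},\dots,x_r^{\pm1}]]((x_0)))$. A toroidal vertex algebra is a vector space $V$ with a linear map $Y(\cdot;x_0,\mathbf{x}):V\to\mathcal{E}(V,r)$, $v\mapsto\sum_{(m_0,\mathbf{m})\in\mathbb{Z}\times\mathbb{Z}^r}v_{m_0,\mathbf{m}}x_0^{-m_0-1}\mathbf{x}^{-\mathbf{m}}$, and a vector $\mathbf{1}$ with $Y(\mathbf{1};x_0,\mathbf{x})v=v$, $Y(v;x_0,\mathbf{x})\mathbf{1}\in V[[x_0,x_1^{\pm1},\dots,x_r^{\pm1}]]$, and the Jacobi identity $$z_0^{-1}\delta\!\left(\tfrac{x_0-y_0}{z_0}\right)Y(u;x_0,\mathbf{z}\mathbf{y})Y(v;y_0,\mathbf{y})-z_0^{-1}\delta\!\left(\tfrac{y_0-x_0}{-z_0}\right)Y(v;y_0,\mathbf{y})Y(u;x_0,\mathbf{z}\mathbf{y})=y_0^{-1}\delta\!\left(\tfrac{x_0-z_0}{y_0}\right)Y(Y(u;z_0,\mathbf{z})v;y_0,\mathbf{y})$$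 for all $u,v$, where $Y(u;x_0,\mathbf{z}\mathbf{y})=\sum u_{m_0,\mathbf{m}}x_0^{-m_0-1}\mathbf{z}^{-\mathbf{m}}\mathbf{y}^{-\mathbf{m}}$. $V^0=\mathrm{span}\{v_{m_0,\mathbf{m}}\mathbf{1}\}$; for $v\in V^0$, $Y(v;x_0,\mathbf{x})$ is a Laurent polynomial in $x_1,\dots,x_r$ and $Y^0(v,x_0)=Y(v;x_0,\mathbf{x})|_{\mathbf{x}=1}$ makes $(V^0,Y^0,\mathbf{1})$ a vertex algebra. A vertex $\mathbb{Z}^r$-graded algebra is a vertex algebra $U$ with a grading $U=\bigoplus_{\mathbf{m}\in\mathbb{Z}^r}U_{(\mathbf{m})}$ such that $\mathbf{1}\in U_{(\mathbf{0})}$ and $u_kv\in U_{(\mathbf{m}+\mathbf{n})}$ for $u\in U_{(\mathbf{m})}$, $v\in U_{(\mathbf{n})}$, $k\in\mathbb{Z}$. *)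

theory Defs
  imports Complex_Main "HOL-Library.Groups_Big_Fun"
begin

(* Conventions.
   - The ground field is the complex numbers; a vector space V is a type 'v together with a
     scalar multiplication  scale :: complex => 'v => 'v  satisfying the vector_space axioms.
   - Z^r is represented by functions  'r => int  where 'r is a finite (nonempty) index type,
     r = CARD('r).
   - A toroidal field operator Y(v;x0,x) = sum v_{m0,m} x0^(-m0-1) x^(-m) is given by its
     modes:  Y v m0 m w = v_{m0,m} w.
   - "Infinite" sums that are finite because of truncation are written with Sum_any
     (the sum over the finite support). *)

text \<open>The Jacobi identity of a toroidal vertex algebra, written out coefficientwise: the
coefficient of  x0^(-p-1) y0^(-q-1) z0^(-n-1) z^(-m) y^(-k)  applied to w.\<close>

definition toroidal_jacobi ::
  "(complex \<Rightarrow> 'v::ab_group_add \<Rightarrow> 'v) \<Rightarrow> ('v \<Rightarrow> int \<Rightarrow> ('r \<Rightarrow> int) \<Rightarrow> 'v \<Rightarrow> 'v) \<Rightarrow> bool" where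
  "toroidal_jacobi scale Y \<longleftrightarrow>
    (\<forall>u v w p q n m k.
      Sum_any (\<lambda>i::nat. scale (of_int p gchoose i)
                 (Y (Y u (n + int i) m v) (p + q - int i) k w))
      = Sum_any (\<lambda>i::nat. scale ((-1) ^ i * (of_int n gchoose i))
                 (Y u (p + n - int i) m (Y v (q + int i) (\<lambda>j. k j - m j) w)
                  - scale ((-1) powi n) (Y v (n + q - int i) (\<lambda>j. k j - m j) (Y u (p + int i) m w)))))"

definition toroidal_vertex_algebra ::
  "(complex \<Rightarrow> 'v::ab_group_add \<Rightarrow> 'v) \<Rightarrow> ('v \<Rightarrow> int \<Rightarrow> ('r \<Rightarrow> int) \<Rightarrow> 'v \<Rightarrow> 'v) \<Rightarrow> 'v \<Rightarrow> bool" where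
  "toroidal_vertex_algebra scale Y vac \<longleftrightarrow>
    vector_space scale
    \<comment> \<open>Y : V -> E(V,r) is linear and takes values in linear maps\<close>
    \<and> (\<forall>m0 m w. Vector_Spaces.linear scale scale (\<lambda>v. Y v m0 m w))
    \<and> (\<forall>v m0 m. Vector_Spaces.linear scale scale (Y v m0 m))
    \<comment> \<open>Y(v;x0,x)w lies in V[[x^{\<pm>1}]]((x0))\<close>
    \<and> (\<forall>v w. \<exists>N. \<forall>m0 \<ge> N. \<forall>m. Y v m0 m w = 0)
    \<comment> \<open>Y(1;x0,x)v = v\<close>
    \<and> (\<forall>m0 m v. Y vac m0 m v = (if m0 = -1 \<and> m = (\<lambda>_. 0) then v else 0))
    \<comment> \<open>Y(v;x0,x)1 lies in V[[x0,x^{\<pm>1}]]\<close>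
    \<and> (\<forall>v m0 m. m0 \<ge> 0 \<longrightarrow> Y v m0 m vac = 0)
    \<and> toroidal_jacobi scale Y"

definition V0 :: "(complex \<Rightarrow> 'v::ab_group_add \<Rightarrow> 'v) \<Rightarrow> ('v \<Rightarrow> int \<Rightarrow> ('r \<Rightarrow> int) \<Rightarrow> 'v \<Rightarrow> 'v) \<Rightarrow> 'v \<Rightarrow> 'v set" where
  "V0 scale Y vac = module.span scale {Y v m0 m vac | v m0 m. True}"

text \<open>Y^0(v,x0) = Y(v;x0,x) at x = 1, in modes: v_k^0 w = sum over m of v_{k,m} w.\<close>
definition Y0 :: "('v::ab_group_add \<Rightarrow> int \<Rightarrow> ('r \<Rightarrow> int) \<Rightarrow> 'v \<Rightarrow> 'v) \<Rightarrow> 'v \<Rightarrow> int \<Rightarrow> 'v \<Rightarrow> 'v" where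
  "Y0 Y v k w = Sum_any (\<lambda>m. Y v k m w)"

definition Vgr :: "('v \<Rightarrow> int \<Rightarrow> ('r \<Rightarrow> int) \<Rightarrow> 'v \<Rightarrow> 'v) \<Rightarrow> 'v \<Rightarrow> ('r \<Rightarrow> int) \<Rightarrow> 'v set" where
  "Vgr Y vac m = {Y v (-1) (\<lambda>j. - m j) vac | v. True}"

definition internal_direct_sum ::
  "(complex \<Rightarrow> 'v::ab_group_add \<Rightarrow> 'v) \<Rightarrow> ('i \<Rightarrow> 'v set) \<Rightarrow> 'v set \<Rightarrow> bool" where
  "internal_direct_sum scale W S \<longleftrightarrow>
    (\<forall>i. module.subspace scale (W i))
    \<and> S = module.span scale (\<Union>i. W i)
    \<and> (\<forall>F x. finite F \<longrightarrow> (\<forall>i\<in>F. x i \<in> W i) \<longrightarrow> sum x F = 0 \<longrightarrow> (\<forall>i\<in>F. x i = 0))"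

text \<open>A vertex algebra (U, Y, 1) where U is a subspace of the vector space (type 'v, scale),
  Y given by modes  Y u k v = u_k v  (Y(u,x) = sum u_k x^(-k-1)); Jacobi identity in
  components (Borcherds identity).\<close>
definition vertex_algebra ::
  "(complex \<Rightarrow> 'v::ab_group_add \<Rightarrow> 'v) \<Rightarrow> 'v set \<Rightarrow> ('v \<Rightarrow> int \<Rightarrow> 'v \<Rightarrow> 'v) \<Rightarrow> 'v \<Rightarrow> bool" where
  "vertex_algebra scale U Y vac \<longleftrightarrow>
    vector_space scale
    \<and> module.subspace scale U
    \<and> vac \<in> U
    \<and> (\<forall>u\<in>U. \<forall>v\<in>U. \<forall>k. Y u k v \<in> U)
    \<comment> \<open>linearity of Y in both arguments (on U)\<close>
    \<and> (\<forall>k. \<forall>a. \<forall>u\<in>U. \<forall>u'\<in>U. \<forall>v\<in>U. Y (scale a u + u') k v = scale a (Y u k v) + Y u' k v)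
    \<and> (\<forall>k. \<forall>a. \<forall>u\<in>U. \<forall>v\<in>U. \<forall>v'\<in>U. Y u k (scale a v + v') = scale a (Y u k v) + Y u k v')
    \<comment> \<open>truncation: Y(u,x)v in U((x))\<close>
    \<and> (\<forall>u\<in>U. \<forall>v\<in>U. \<exists>N. \<forall>k\<ge>N. Y u k v = 0)
    \<comment> \<open>vacuum property Y(1,x) = id\<close>
    \<and> (\<forall>v\<in>U. \<forall>k. Y vac k v = (if k = -1 then v else 0))
    \<comment> \<open>creation property: Y(v,x)1 in U[[x]] and its constant term is v\<close>
    \<and> (\<forall>v\<in>U. (\<forall>k\<ge>0. Y v k vac = 0) \<and> Y v (-1) vac = v)
    \<comment> \<open>Jacobi identity, coefficient of x0^(-p-1) y0^(-q-1) z0^(-n-1)\<close>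
    \<and> (\<forall>u\<in>U. \<forall>v\<in>U. \<forall>w\<in>U. \<forall>p q n.
      Sum_any (\<lambda>i::nat. scale (of_int p gchoose i) (Y (Y u (n + int i) v) (p + q - int i) w))
      = Sum_any (\<lambda>i::nat. scale ((-1) ^ i * (of_int n gchoose i))
                 (Y u (p + n - int i) (Y v (q + int i) w)
                  - scale ((-1) powi n) (Y v (n + q - int i) (Y u (p + int i) w)))))"

definition vertex_graded_algebra ::
  "(complex \<Rightarrow> 'v::ab_group_add \<Rightarrow> 'v) \<Rightarrow> 'v set \<Rightarrow> ('v \<Rightarrow> int \<Rightarrow> 'v \<Rightarrow> 'v) \<Rightarrow> 'v
     \<Rightarrow> (('r \<Rightarrow> int) \<Rightarrow> 'v set) \<Rightarrow> bool" where
  "vertex_graded_algebra scale U Y vac G \<longleftrightarrow>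
    vertex_algebra scale U Y vac
    \<and> internal_direct_sum scale G U
    \<and> vac \<in> G (\<lambda>_. 0)
    \<and> (\<forall>m n u v k. u \<in> G m \<longrightarrow> v \<in> G n \<longrightarrow> Y u k v \<in> G (\<lambda>j. m j + n j))"

end

theory Submission
  imports Defs
begin

lemma SA_single:
  assumes "\<And>i. i \<noteq> i0 \<Longrightarrow> f i = (0::'a::comm_monoid_add)"
  shows "Sum_any f = f i0"
proof -
  have "Sum_any f = sum f {i0}"
    by (rule Sum_any.expand_superset) (use assms in auto)
  then show ?thesis by simp
qed

lemma SA_swap:
  assumes "finite A" and "\<And>a. a \<in> A \<Longrightarrow> finite {i. f a i \<noteq> (0::'a::comm_monoid_add)}"
  shows "Sum_any (\<lambda>i. sum (\<lambda>a. f a i) A) = sum (\<lambda>a. Sum_any (f a)) A"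
proof -
  define B where "B = (\<Union>a\<in>A. {i. f a i \<noteq> 0})"
  have fB: "finite B" using assms unfolding B_def by auto
  have "Sum_any (\<lambda>i. sum (\<lambda>a. f a i) A) = sum (\<lambda>i. sum (\<lambda>a. f a i) A) B"
  proof (rule Sum_any.expand_superset[OF fB])
    show "{i. (\<Sum>a\<in>A. f a i) \<noteq> 0} \<subseteq> B"
    proof
      fix i assume "i \<in> {i. (\<Sum>a\<in>A. f a i) \<noteq> 0}"
      then obtain a where "a \<in> A" "f a i \<noteq> 0"
        by (metis (mono_tags, lifting) mem_Collect_eq sum.neutral)
      then show "i \<in> B" unfolding B_def by auto
    qed
  qed
  also have "\<dots> = sum (\<lambda>a. sum (f a) B) A" by (rule sum.swap)
  also have "\<dots> = sum (\<lambda>a. Sum_any (f a)) A"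
  proof (rule sum.cong[OF refl])
    fix a assume "a \<in> A"
    then show "sum (f a) B = Sum_any (f a)"
      by (intro Sum_any.expand_superset[symmetric] fB) (auto simp: B_def)
  qed
  finally show ?thesis .
qed

lemma fin_supp_nat:
  assumes "\<And>i. i \<ge> K \<Longrightarrow> f i = 0"
  shows "finite {i::nat. f i \<noteq> 0}"
proof -
  have "{i::nat. f i \<noteq> 0} \<subseteq> {..<K}" using assms by (auto simp: not_less[symmetric])
  then show ?thesis using finite_subset by blast
qed

locale tva = vector_space scale
  for scale :: "complex \<Rightarrow> 'v::ab_group_add \<Rightarrow> 'v" +
  fixes Y :: "'v \<Rightarrow> int \<Rightarrow> ('r::finite \<Rightarrow> int) \<Rightarrow> 'v \<Rightarrow> 'v" and vac :: 'v
  assumes Y1_add: "Y (x + y) m0 m w = Y x m0 m w + Y y m0 m w"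
  and Y1_scale: "Y (scale c x) m0 m w = scale c (Y x m0 m w)"
  and Y2_add: "Y v m0 m (x + y) = Y v m0 m x + Y v m0 m y"
  and Y2_scale: "Y v m0 m (scale c x) = scale c (Y v m0 m x)"
  and trunc: "\<exists>N. \<forall>m0\<ge>N. \<forall>m. Y v m0 m w = 0"
  and vacY: "Y vac m0 m v = (if m0 = -1 \<and> m = (\<lambda>_. 0) then v else 0)"
  and cre: "m0 \<ge> 0 \<Longrightarrow> Y v m0 m vac = 0"
  and jac0: "toroidal_jacobi scale Y"
begin

lemma Y1_zero[simp]: "Y 0 m0 m w = 0"
  using Y1_scale[of 0 0 m0 m w] by simp

lemma Y2_zero[simp]: "Y v m0 m 0 = 0"
  using Y2_scale[of v m0 m 0 0] by simp

lemma Y1_sum: "Y (sum f A) m0 m w = sum (\<lambda>a. Y (f a) m0 m w) A"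
  by (induct A rule: infinite_finite_induct) (simp_all add: Y1_add)

lemma Y2_sum: "Y v m0 m (sum f A) = sum (\<lambda>a. Y v m0 m (f a)) A"
  by (induct A rule: infinite_finite_induct) (simp_all add: Y2_add)

lemma jac: "Sum_any (\<lambda>i::nat. scale (of_int p gchoose i)
                 (Y (Y u (n + int i) m v) (p + q - int i) k w))
      = Sum_any (\<lambda>i::nat. scale ((-1) ^ i * (of_int n gchoose i))
                 (Y u (p + n - int i) m (Y v (q + int i) (\<lambda>j. k j - m j) w)
                  - scale ((-1) powi n) (Y v (n + q - int i) (\<lambda>j. k j - m j) (Y u (p + int i) m w))))"
  using jac0 unfolding toroidal_jacobi_def by blast

lemma J0: "Y (Y u n m v) q k w
      = Sum_any (\<lambda>i::nat. scale ((-1) ^ i * (of_int n gchoose i))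
                 (Y u (n - int i) m (Y v (q + int i) (\<lambda>j. k j - m j) w)
                  - scale ((-1) powi n) (Y v (n + q - int i) (\<lambda>j. k j - m j) (Y u (int i) m w))))"
proof -
  have "Sum_any (\<lambda>i::nat. scale (of_int 0 gchoose i)
                 (Y (Y u (n + int i) m v) (0 + q - int i) k w)) = Y (Y u n m v) q k w"
    by (subst SA_single[of 0]) (auto simp: gbinomial_0_left)
  then show ?thesis using jac[of 0 u n m v q k w] by simp
qed

lemma S: assumes "k \<noteq> m" shows "Y (Y u n m vac) q k w = 0"
proof -
  have "(\<lambda>j. k j - m j) \<noteq> (\<lambda>_. 0)"
  proof
    assume "(\<lambda>j. k j - m j) = (\<lambda>_. 0)"
    then have "k = m" by (metis (no_types, lifting) eq_iff_diff_eq_0 ext)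
    with assms show False by simp
  qed
  then show ?thesis by (subst J0) (simp add: vacY)
qed

lemma C: "Y (Y u n m vac) (-1) m vac = Y u n m vac"
proof -
  have "Y (Y u n m vac) (-1) m vac = Sum_any (\<lambda>i::nat. scale ((-1) ^ i * (of_int n gchoose i))
                 (Y u (n - int i) m (Y vac (-1 + int i) (\<lambda>j. m j - m j) vac)
                  - scale ((-1) powi n) (Y vac (n + -1 - int i) (\<lambda>j. m j - m j) (Y u (int i) m vac))))"
    by (rule J0)
  also have "\<dots> = Y u n m vac"
    by (subst SA_single[of 0]) (auto simp: vacY cre)
  finally show ?thesis .
qed

definition Gc :: "('r \<Rightarrow> int) \<Rightarrow> 'v set" where
  "Gc c = {Y v (-1) c vac | v. True}"

lemma Gc_subspace: "subspace (Gc c)"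
  unfolding subspace_def Gc_def
proof (intro conjI ballI allI)
  show "0 \<in> {Y v (- 1) c vac |v. True}" by (rule CollectI, rule exI[of _ 0]) simp
next
  fix x y assume "x \<in> {Y v (- 1) c vac |v. True}" "y \<in> {Y v (- 1) c vac |v. True}"
  then obtain a b where "x = Y a (-1) c vac" "y = Y b (-1) c vac" by auto
  then show "x + y \<in> {Y v (- 1) c vac |v. True}" by (auto simp: Y1_add[symmetric])
next
  fix d x assume "x \<in> {Y v (- 1) c vac |v. True}"
  then obtain a where "x = Y a (-1) c vac" by auto
  then show "scale d x \<in> {Y v (- 1) c vac |v. True}" by (auto simp: Y1_scale[symmetric])
qed

lemma Gen: "Y u n c vac \<in> Gc c"
  unfolding Gc_def using C[of u n c, symmetric] by blast

lemma Gc_S: "x \<in> Gc c \<Longrightarrow> k \<noteq> c \<Longrightarrow> Y x q k w = 0"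
  unfolding Gc_def using S by blast

lemma Gc_C: "x \<in> Gc c \<Longrightarrow> Y x (-1) c vac = x"
  unfolding Gc_def using C by blast

lemma L: "Y u n a (Y y q b vac) \<in> Gc (\<lambda>j. a j + b j)"
proof (induction "nat (-q)" arbitrary: n q rule: less_induct)
  case less
  show ?case
  proof (cases "q \<ge> 0")
    case True
    then show ?thesis using cre subspace_0[OF Gc_subspace] by simp
  next
    case False
    define K where "K = nat (-q)"
    have K0: "0 < K" using False K_def by simp
    define f where "f = (\<lambda>i::nat. scale ((-1)^i * (of_int n gchoose i)) (Y u (n - int i) a (Y y (q + int i) b vac)))"
    have ab: "(\<lambda>j. a j + b j - a j) = b" by simp
    have J: "Y (Y u n a y) q (\<lambda>j. a j + b j) vac = Sum_any f"
      unfolding f_def by (subst J0) (simp add: cre ab)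
    have "Sum_any f = sum f {..<K}"
    proof (rule Sum_any.expand_superset)
      show "{i. f i \<noteq> 0} \<subseteq> {..<K}"
      proof
        fix i assume "i \<in> {i. f i \<noteq> 0}"
        then have "f i \<noteq> 0" by simp
        then have "\<not> q + int i \<ge> 0" unfolding f_def using cre by auto
        then show "i \<in> {..<K}" unfolding K_def by simp
      qed
    qed simp
    also have "\<dots> = f 0 + sum f ({..<K} - {0})"
      using K0 by (subst sum.remove[of _ 0]) auto
    finally have eq: "f 0 = Sum_any f - sum f ({..<K} - {0})" by (simp add: algebra_simps)
    have rest: "sum f ({..<K} - {0}) \<in> Gc (\<lambda>j. a j + b j)"
    proof (rule subspace_sum[OF Gc_subspace])
      fix i assume i: "i \<in> {..<K} - {0}"
      then have "nat (- (q + int i)) < nat (-q)" using False by auto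
      then have "Y u (n - int i) a (Y y (q + int i) b vac) \<in> Gc (\<lambda>j. a j + b j)"
        by (rule less)
      then show "f i \<in> Gc (\<lambda>j. a j + b j)" unfolding f_def
        by (rule subspace_scale[OF Gc_subspace])
    qed
    have "Sum_any f \<in> Gc (\<lambda>j. a j + b j)" unfolding J[symmetric] by (rule Gen)
    then have "f 0 \<in> Gc (\<lambda>j. a j + b j)" unfolding eq using rest
      by (rule subspace_diff[OF Gc_subspace])
    then show ?thesis unfolding f_def by simp
  qed
qed

lemma Lc: "v \<in> Gc b \<Longrightarrow> Y u n a v \<in> Gc (\<lambda>j. a j + b j)"
proof -
  assume "v \<in> Gc b"
  then obtain y where "v = Y y (-1) b vac" unfolding Gc_def by auto
  then show ?thesis using L by simp
qed

abbreviation "VV \<equiv> V0 scale Y vac"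

lemma VV_def: "VV = span {Y v m0 m vac | v m0 m. True}"
  unfolding V0_def by simp

lemma Gen_VV: "Y v m0 m vac \<in> VV"
  unfolding VV_def by (rule span_base) blast

lemma Gc_VV: "x \<in> Gc c \<Longrightarrow> x \<in> VV"
  unfolding Gc_def using Gen_VV by blast

lemma VV_closed: "x \<in> VV \<Longrightarrow> Y u n a x \<in> VV"
proof -
  assume "x \<in> VV"
  then have "x \<in> span {Y v m0 m vac | v m0 m. True}" by (simp add: VV_def)
  then show ?thesis
  proof (induct rule: span_induct_alt)
    case base then show ?case by (simp add: VV_def span_zero)
  next
    case (step c x y)
    then obtain v m0 m where x: "x = Y v m0 m vac" by auto
    have "Y u n a x \<in> VV" unfolding x by (rule Gc_VV[OF L])
    then have "scale c (Y u n a x) + Y u n a y \<in> VV"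
      using step by (simp add: VV_def span_add span_scale)
    then show ?case by (simp add: Y2_add Y2_scale)
  qed
qed

definition supp_ok :: "'v \<Rightarrow> ('r \<Rightarrow> int) set \<Rightarrow> bool" where
  "supp_ok x A \<longleftrightarrow> finite A \<and> (\<forall>c q w. c \<notin> A \<longrightarrow> Y x q c w = 0)"

abbreviation "dec x c \<equiv> Y x (-1) c vac"

lemma VV_dec: "x \<in> VV \<Longrightarrow> \<exists>A. supp_ok x A \<and> x = sum (dec x) A"
proof -
  assume "x \<in> VV"
  then have "x \<in> span {Y v m0 m vac | v m0 m. True}" by (simp add: VV_def)
  then show ?thesis
  proof (induct rule: span_induct_alt)
    case base then show ?case by (intro exI[of _ "{}"]) (simp add: supp_ok_def)
  next
    case (step c x z)
    then obtain v m0 b where x: "x = Y v m0 b vac" by auto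
    from step obtain A where A: "supp_ok z A" "z = sum (dec z) A" by auto
    define B where "B = insert b A"
    have fB: "finite B" using A by (simp add: B_def supp_ok_def)
    have sB: "supp_ok (scale c x + z) B"
      using A fB unfolding supp_ok_def B_def by (auto simp: Y1_add Y1_scale x S)
    have dx: "dec x k = (if k = b then x else 0)" for k
      unfolding x using C S by auto
    have "sum (dec x) B = x" unfolding dx using fB by (simp add: B_def)
    moreover have "sum (dec z) B = z"
    proof (cases "b \<in> A")
      case True then show ?thesis using A by (simp add: B_def insert_absorb)
    next
      case False
      then have "dec z b = 0" using A by (simp add: supp_ok_def)
      then show ?thesis using A False by (simp add: B_def supp_ok_def)
    qed
    ultimately have "sum (dec (scale c x + z)) B = scale c x + z"
      by (simp add: Y1_add Y1_scale sum.distrib scale_sum_right[symmetric])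
    then show ?case using sB by metis
  qed
qed

lemma supp_mono: "supp_ok x A \<Longrightarrow> finite B \<Longrightarrow> A \<subseteq> B \<Longrightarrow> supp_ok x B"
  unfolding supp_ok_def by blast

lemma VV_supp: "x \<in> VV \<Longrightarrow> \<exists>A. supp_ok x A"
  using VV_dec by blast

lemma Gc_supp: "x \<in> Gc c \<Longrightarrow> supp_ok x {c}"
  unfolding supp_ok_def using Gc_S by blast

lemma Y0_eq: "supp_ok x A \<Longrightarrow> Y0 Y x k w = sum (\<lambda>m. Y x k m w) A"
  unfolding Y0_def supp_ok_def by (rule Sum_any.expand_superset) auto

lemma Gc_Y0: "x \<in> Gc c \<Longrightarrow> Y0 Y x k w = Y x k c w"
  using Y0_eq[OF Gc_supp] by simp

lemma Y0_zero2[simp]: "Y0 Y u k 0 = 0"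
  unfolding Y0_def by simp

lemma Y0_zero1[simp]: "Y0 Y 0 k w = 0"
  unfolding Y0_def by simp

lemma Y0_sum_first:
  assumes "finite I" "\<And>i. i \<in> I \<Longrightarrow> z i \<in> VV"
  shows "Y0 Y (sum z I) k w = sum (\<lambda>i. Y0 Y (z i) k w) I"
proof -
  have "\<forall>i\<in>I. \<exists>A. supp_ok (z i) A" using assms VV_supp by blast
  then obtain AA where AA: "\<And>i. i \<in> I \<Longrightarrow> supp_ok (z i) (AA i)" by metis
  define B where "B = (\<Union>i\<in>I. AA i)"
  have fB: "finite B" using AA assms(1) by (auto simp: B_def supp_ok_def)
  have sB: "\<And>i. i \<in> I \<Longrightarrow> supp_ok (z i) B"
    using AA fB by (rule supp_mono) (auto simp: B_def)
  have sS: "supp_ok (sum z I) B"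
    using sB fB unfolding supp_ok_def by (auto simp: Y1_sum)
  have "Y0 Y (sum z I) k w = sum (\<lambda>m. sum (\<lambda>i. Y (z i) k m w) I) B"
    using Y0_eq[OF sS] by (simp add: Y1_sum)
  also have "\<dots> = sum (\<lambda>i. sum (\<lambda>m. Y (z i) k m w) B) I" by (rule sum.swap)
  also have "\<dots> = sum (\<lambda>i. Y0 Y (z i) k w) I"
    using Y0_eq[OF sB] by simp
  finally show ?thesis .
qed

lemma Y0_sum_second:
  assumes "u \<in> VV"
  shows "Y0 Y u k (sum x I) = sum (\<lambda>i. Y0 Y u k (x i)) I"
proof -
  obtain A where A: "supp_ok u A" using VV_supp assms by blast
  show ?thesis using Y0_eq[OF A] by (simp add: Y2_sum sum.swap[of _ I])
qed

lemma Y0_lin1: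
  assumes "u \<in> VV" "u' \<in> VV"
  shows "Y0 Y (scale a u + u') k v = scale a (Y0 Y u k v) + Y0 Y u' k v"
proof -
  obtain A A' where A: "supp_ok u A" "supp_ok u' A'" using VV_supp assms by blast
  have fB: "finite (A \<union> A')" using A by (simp add: supp_ok_def)
  have s1: "supp_ok u (A \<union> A')" "supp_ok u' (A \<union> A')"
    using A fB by (auto intro: supp_mono)
  have s2: "supp_ok (scale a u + u') (A \<union> A')"
    using s1 fB unfolding supp_ok_def by (auto simp: Y1_add Y1_scale)
  show ?thesis using Y0_eq[OF s1(1)] Y0_eq[OF s1(2)] Y0_eq[OF s2]
    by (simp add: Y1_add Y1_scale sum.distrib scale_sum_right)
qed

lemma Y0_lin2:
  assumes "u \<in> VV"
  shows "Y0 Y u k (scale a v + v') = scale a (Y0 Y u k v) + Y0 Y u k v'"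
proof -
  obtain A where A: "supp_ok u A" using VV_supp assms by blast
  show ?thesis using Y0_eq[OF A] by (simp add: Y2_add Y2_scale sum.distrib scale_sum_right)
qed

lemma Y0_trunc:
  assumes "u \<in> VV"
  shows "\<exists>N. \<forall>k\<ge>N. Y0 Y u k v = 0"
proof -
  obtain A where A: "supp_ok u A" using VV_supp assms by blast
  obtain N where "\<forall>m0\<ge>N. \<forall>m. Y u m0 m v = 0" using trunc by blast
  then show ?thesis using Y0_eq[OF A] by (intro exI[of _ N]) simp
qed

lemma Y0_closed:
  assumes "u \<in> VV" "v \<in> VV"
  shows "Y0 Y u k v \<in> VV"
proof -
  obtain A where A: "supp_ok u A" using VV_supp assms by blast
  show ?thesis unfolding Y0_eq[OF A] VV_def
    by (rule span_sum) (use VV_closed[OF assms(2)] in \<open>simp add: VV_def\<close>)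
qed

lemma trunc_fin:
  assumes "u \<in> VV"
  obtains N where "\<And>i::nat. n + int i \<ge> N \<Longrightarrow> Y0 Y u (n + int i) v = 0"
  using Y0_trunc[OF assms, of v] by blast

definition JL where "JL u v w p q n = Sum_any (\<lambda>i::nat. scale (of_int p gchoose i) (Y0 Y (Y0 Y u (n + int i) v) (p + q - int i) w))"
definition JR where "JR u v w p q n = Sum_any (\<lambda>i::nat. scale ((-1) ^ i * (of_int n gchoose i))
                 (Y0 Y u (p + n - int i) (Y0 Y v (q + int i) w)
                  - scale ((-1) powi n) (Y0 Y v (n + q - int i) (Y0 Y u (p + int i) w))))"

lemma fin_from: "(\<And>i::nat. c + int i \<ge> N \<Longrightarrow> f i = 0) \<Longrightarrow> finite {i. f i \<noteq> 0}"
  by (rule fin_supp_nat[of "nat (N - c)"]) auto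

lemma fin_from2: "(\<And>i::nat. c + int i \<ge> N \<Longrightarrow> d + int i \<ge> M \<Longrightarrow> f i = 0) \<Longrightarrow> finite {i. f i \<noteq> 0}"
  by (rule fin_supp_nat[of "nat (N - c) + nat (M - d)"]) auto

lemma JL_sum1:
  assumes "finite I" "\<And>i. i \<in> I \<Longrightarrow> z i \<in> VV" "v \<in> VV"
  shows "JL (sum z I) v w p q n = sum (\<lambda>a. JL (z a) v w p q n) I"
proof -
  have "JL (sum z I) v w p q n = Sum_any (\<lambda>i::nat. sum (\<lambda>a. scale (of_int p gchoose i) (Y0 Y (Y0 Y (z a) (n + int i) v) (p + q - int i) w)) I)"
    unfolding JL_def using assms Y0_closed
    by (simp add: Y0_sum_first scale_sum_right)
  also have "\<dots> = sum (\<lambda>a. JL (z a) v w p q n) I"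
    unfolding JL_def
  proof (rule SA_swap[OF assms(1)])
    fix a assume "a \<in> I"
    then obtain N where "\<And>i::nat. n + int i \<ge> N \<Longrightarrow> Y0 Y (z a) (n + int i) v = 0"
      using trunc_fin assms by metis
    then show "finite {i. scale (of_int p gchoose i) (Y0 Y (Y0 Y (z a) (n + int i) v) (p + q - int i) w) \<noteq> 0}"
      by (intro fin_from[where c=n and N=N]) simp
  qed
  finally show ?thesis .
qed

lemma JL_sum2:
  assumes "finite I" "\<And>i. i \<in> I \<Longrightarrow> z i \<in> VV" "u \<in> VV"
  shows "JL u (sum z I) w p q n = sum (\<lambda>a. JL u (z a) w p q n) I"
proof -
  have "JL u (sum z I) w p q n = Sum_any (\<lambda>i::nat. sum (\<lambda>a. scale (of_int p gchoose i) (Y0 Y (Y0 Y u (n + int i) (z a)) (p + q - int i) w)) I)"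
    unfolding JL_def using assms Y0_closed
    by (simp add: Y0_sum_first Y0_sum_second scale_sum_right)
  also have "\<dots> = sum (\<lambda>a. JL u (z a) w p q n) I"
    unfolding JL_def
  proof (rule SA_swap[OF assms(1)])
    fix a assume "a \<in> I"
    obtain N where "\<And>i::nat. n + int i \<ge> N \<Longrightarrow> Y0 Y u (n + int i) (z a) = 0"
      using trunc_fin assms by metis
    then show "finite {i. scale (of_int p gchoose i) (Y0 Y (Y0 Y u (n + int i) (z a)) (p + q - int i) w) \<noteq> 0}"
      by (intro fin_from[where c=n and N=N]) simp
  qed
  finally show ?thesis .
qed

lemma JR_sum1:
  assumes "finite I" "\<And>i. i \<in> I \<Longrightarrow> z i \<in> VV" "v \<in> VV"
  shows "JR (sum z I) v w p q n = sum (\<lambda>a. JR (z a) v w p q n) I"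
proof -
  have "JR (sum z I) v w p q n = Sum_any (\<lambda>i::nat. sum (\<lambda>a. scale ((-1) ^ i * (of_int n gchoose i))
                 (Y0 Y (z a) (p + n - int i) (Y0 Y v (q + int i) w)
                  - scale ((-1) powi n) (Y0 Y v (n + q - int i) (Y0 Y (z a) (p + int i) w)))) I)"
    unfolding JR_def using assms
    by (simp add: Y0_sum_first Y0_sum_second scale_sum_right sum_subtractf scale_right_diff_distrib)
  also have "\<dots> = sum (\<lambda>a. JR (z a) v w p q n) I"
    unfolding JR_def
  proof (rule SA_swap[OF assms(1)])
    fix a assume "a \<in> I"
    obtain N where N: "\<And>i::nat. q + int i \<ge> N \<Longrightarrow> Y0 Y v (q + int i) w = 0"
      using trunc_fin assms by metis
    obtain M where M: "\<And>i::nat. p + int i \<ge> M \<Longrightarrow> Y0 Y (z a) (p + int i) w = 0"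
      using trunc_fin assms \<open>a \<in> I\<close> by metis
    show "finite {i. scale ((-1) ^ i * (of_int n gchoose i))
                 (Y0 Y (z a) (p + n - int i) (Y0 Y v (q + int i) w)
                  - scale ((-1) powi n) (Y0 Y v (n + q - int i) (Y0 Y (z a) (p + int i) w))) \<noteq> 0}"
      by (rule fin_from2[where c=q and N=N and d=p and M=M]) (simp add: N M)
  qed
  finally show ?thesis .
qed

lemma JR_sum2:
  assumes "finite I" "\<And>i. i \<in> I \<Longrightarrow> z i \<in> VV" "u \<in> VV"
  shows "JR u (sum z I) w p q n = sum (\<lambda>a. JR u (z a) w p q n) I"
proof -
  have "JR u (sum z I) w p q n = Sum_any (\<lambda>i::nat. sum (\<lambda>a. scale ((-1) ^ i * (of_int n gchoose i))
                 (Y0 Y u (p + n - int i) (Y0 Y (z a) (q + int i) w)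
                  - scale ((-1) powi n) (Y0 Y (z a) (n + q - int i) (Y0 Y u (p + int i) w)))) I)"
    unfolding JR_def using assms
    by (simp add: Y0_sum_first Y0_sum_second scale_sum_right sum_subtractf scale_right_diff_distrib)
  also have "\<dots> = sum (\<lambda>a. JR u (z a) w p q n) I"
    unfolding JR_def
  proof (rule SA_swap[OF assms(1)])
    fix a assume "a \<in> I"
    obtain N where N: "\<And>i::nat. q + int i \<ge> N \<Longrightarrow> Y0 Y (z a) (q + int i) w = 0"
      using trunc_fin assms \<open>a \<in> I\<close> by metis
    obtain M where M: "\<And>i::nat. p + int i \<ge> M \<Longrightarrow> Y0 Y u (p + int i) w = 0"
      using trunc_fin assms by metis
    show "finite {i. scale ((-1) ^ i * (of_int n gchoose i))
                 (Y0 Y u (p + n - int i) (Y0 Y (z a) (q + int i) w)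
                  - scale ((-1) powi n) (Y0 Y (z a) (n + q - int i) (Y0 Y u (p + int i) w))) \<noteq> 0}"
      by (rule fin_from2[where c=q and N=N and d=p and M=M]) (simp add: N M)
  qed
  finally show ?thesis .
qed

lemma J_hom:
  assumes "u \<in> Gc a" "v \<in> Gc b"
  shows "JL u v w p q n = JR u v w p q n"
proof -
  have ab: "(\<lambda>j. a j + b j - a j) = b" by simp
  have inner: "Y0 Y (Y0 Y u (n + int i) v) k w = Y (Y u (n + int i) a v) k (\<lambda>j. a j + b j) w" for i k
    using Gc_Y0[OF assms(1)] Gc_Y0[OF Lc[OF assms(2)]] by simp
  show ?thesis unfolding JL_def JR_def inner
    using jac[of p u n a v q "\<lambda>j. a j + b j" w] by (simp add: Gc_Y0[OF assms(1)] Gc_Y0[OF assms(2)] ab)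
qed

lemma J_gen:
  assumes "u \<in> VV" "v \<in> VV"
  shows "JL u v w p q n = JR u v w p q n"
proof -
  obtain A where A: "supp_ok u A" "u = sum (dec u) A" using VV_dec assms by blast
  obtain B where B: "supp_ok v B" "v = sum (dec v) B" using VV_dec assms by blast
  have fA: "finite A" and fB: "finite B" using A B by (auto simp: supp_ok_def)
  have du: "dec u c \<in> VV" "dec u c \<in> Gc c" and dv: "dec v c \<in> VV" "dec v c \<in> Gc c" for c
    using Gen Gc_VV by blast+
  have "JL u v w p q n = sum (\<lambda>a. sum (\<lambda>b. JL (dec u a) (dec v b) w p q n) B) A"
    apply (subst A(2), subst JL_sum1[OF fA du(1) assms(2)])
    apply (subst B(2), subst JL_sum2[OF fB dv(1) du(1)])
    by (rule refl)
  also have "\<dots> = sum (\<lambda>a. sum (\<lambda>b. JR (dec u a) (dec v b) w p q n) B) A"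
    using J_hom[OF du(2) dv(2)] by simp
  also have "JR u v w p q n = sum (\<lambda>a. sum (\<lambda>b. JR (dec u a) (dec v b) w p q n) B) A"
    apply (subst A(2), subst JR_sum1[OF fA du(1) assms(2)])
    apply (subst B(2), subst JR_sum2[OF fB dv(1) du(1)])
    by (rule refl)
  finally show ?thesis by simp
qed

lemma Vgr_Gc: "Vgr Y vac m = Gc (\<lambda>j. - m j)"
  by (simp add: Vgr_def Gc_def)

lemma ids: "internal_direct_sum scale (Vgr Y vac) VV"
  unfolding internal_direct_sum_def
proof (intro conjI allI impI ballI)
  show "subspace (Vgr Y vac i)" for i unfolding Vgr_Gc by (rule Gc_subspace)
next
  show "VV = span (\<Union>i. Vgr Y vac i)"
    unfolding VV_def span_eq
  proof (intro conjI subsetI)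
    fix x assume "x \<in> {Y v m0 m vac |v m0 m. True}"
    then obtain v m0 m where x: "x = Y v m0 m vac" by auto
    have "x \<in> Vgr Y vac (\<lambda>j. - m j)" unfolding Vgr_Gc x by simp (rule Gen)
    then show "x \<in> span (\<Union>i. Vgr Y vac i)" by (intro span_base) blast
  next
    fix x assume "x \<in> (\<Union>i. Vgr Y vac i)"
    then have "x \<in> {Y v m0 m vac |v m0 m. True}" unfolding Vgr_def by blast
    then show "x \<in> span {Y v m0 m vac |v m0 m. True}" by (rule span_base)
  qed
next
  fix F x i
  assume F: "finite F" and x: "\<forall>i\<in>F. x i \<in> Vgr Y vac i" and s: "sum x F = 0" and i: "i \<in> F"
  have d: "dec (x j) (\<lambda>k. - i k) = (if j = i then x i else 0)" if "j \<in> F" for j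
  proof (cases "j = i")
    case True
    then show ?thesis using x that Gc_C unfolding Vgr_Gc by auto
  next
    case False
    then have "(\<lambda>k. - i k) \<noteq> (\<lambda>k. - j k)" by (metis ext minus_equation_iff)
    then show ?thesis using x that Gc_S False unfolding Vgr_Gc by auto
  qed
  have "0 = dec (sum x F) (\<lambda>k. - i k)" using s by simp
  also have "\<dots> = sum (\<lambda>j. dec (x j) (\<lambda>k. - i k)) F" by (rule Y1_sum)
  also have "\<dots> = sum (\<lambda>j. if j = i then x i else 0) F" using d by (rule sum.cong[OF refl])
  also have "\<dots> = x i" using F i by simp
  finally show "x i = 0" by simp
qed

lemma vac_in: "vac \<in> Vgr Y vac (\<lambda>_. 0)"
  unfolding Vgr_Gc using Gen[of vac "-1" "\<lambda>_. 0"] by (simp add: vacY)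

lemma graded: "u \<in> Vgr Y vac m \<Longrightarrow> v \<in> Vgr Y vac n \<Longrightarrow> Y0 Y u k v \<in> Vgr Y vac (\<lambda>j. m j + n j)"
  unfolding Vgr_Gc using Lc Gc_Y0 by fastforce

lemma vac_VV: "vac \<in> VV"
  using Gen_VV[of vac "-1" "\<lambda>_. 0"] by (simp add: vacY)

lemma va: "vertex_algebra scale VV (Y0 Y) vac"
  unfolding vertex_algebra_def
proof (intro conjI ballI allI impI)
  show "vector_space scale" by unfold_locales
  show "subspace VV" by (simp add: VV_def)
  show "vac \<in> VV" by (rule vac_VV)
  show "Y0 Y u k v \<in> VV" if "u \<in> VV" "v \<in> VV" for u v k using that by (rule Y0_closed)
  show "Y0 Y (scale a u + u') k v = scale a (Y0 Y u k v) + Y0 Y u' k v"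
    if "u \<in> VV" "u' \<in> VV" for u u' v k a using that by (rule Y0_lin1)
  show "Y0 Y u k (scale a v + v') = scale a (Y0 Y u k v) + Y0 Y u k v'"
    if "u \<in> VV" for u v v' k a using that by (rule Y0_lin2)
  show "\<exists>N. \<forall>k\<ge>N. Y0 Y u k v = 0" if "u \<in> VV" for u v using that by (rule Y0_trunc)
  show "Y0 Y vac k v = (if k = - 1 then v else 0)" for k v
  proof -
    have "supp_ok vac {\<lambda>_. 0}" unfolding supp_ok_def by (simp add: vacY)
    then show ?thesis using Y0_eq by (simp add: vacY)
  qed
  fix u assume u: "u \<in> VV"
  then obtain A where A: "supp_ok u A" "u = sum (dec u) A" using VV_dec by blast
  show "Y0 Y u k vac = 0" if "0 \<le> k" for k using Y0_eq[OF A(1)] cre that by simp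
  show "Y0 Y u (-1) vac = u" using Y0_eq[OF A(1)] A(2) by simp
  fix v w p q n assume v: "v \<in> VV"
  show "Sum_any (\<lambda>i::nat. scale (of_int p gchoose i) (Y0 Y (Y0 Y u (n + int i) v) (p + q - int i) w))
      = Sum_any (\<lambda>i::nat. scale ((-1) ^ i * (of_int n gchoose i))
                 (Y0 Y u (p + n - int i) (Y0 Y v (q + int i) w)
                  - scale ((-1) powi n) (Y0 Y v (n + q - int i) (Y0 Y u (p + int i) w))))"
    using J_gen[OF u v] unfolding JL_def JR_def .
qed

end

theorem proposition3p2:
  fixes scale :: "complex \<Rightarrow> 'v::ab_group_add \<Rightarrow> 'v"
    and Y :: "'v \<Rightarrow> int \<Rightarrow> ('r::finite \<Rightarrow> int) \<Rightarrow> 'v \<Rightarrow> 'v"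
    and vac :: 'v
  assumes "toroidal_vertex_algebra scale Y vac"
  shows "internal_direct_sum scale (Vgr Y vac) (V0 scale Y vac)
         \<and> vertex_graded_algebra scale (V0 scale Y vac) (Y0 Y) vac (Vgr Y vac)"
proof -
  note a = assms[unfolded toroidal_vertex_algebra_def]
  have l1: "Vector_Spaces.linear scale scale (\<lambda>v. Y v m0 m w)" for m0 m w using a by blast
  have l2: "Vector_Spaces.linear scale scale (Y v m0 m)" for v m0 m using a by blast
  interpret tva scale Y vac
  proof (unfold_locales)
    show "Y (x + y) m0 m w = Y x m0 m w + Y y m0 m w" for x y m0 m w
      using l1[of m0 m w] unfolding Vector_Spaces.linear_iff by blast
    show "Y (scale c x) m0 m w = scale c (Y x m0 m w)" for c x m0 m w
      using l1[of m0 m w] unfolding Vector_Spaces.linear_iff by blast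
    show "Y v m0 m (x + y) = Y v m0 m x + Y v m0 m y" for x y m0 m v
      using l2[of v m0 m] unfolding Vector_Spaces.linear_iff by blast
    show "Y v m0 m (scale c x) = scale c (Y v m0 m x)" for c x m0 m v
      using l2[of v m0 m] unfolding Vector_Spaces.linear_iff by blast
  qed (use a in \<open>auto simp: vector_space_def module_def\<close>)
  show ?thesis using ids va vac_in graded unfolding vertex_graded_algebra_def by blast
qed

end
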